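(* Let $(\Omega,+)$ be a group and $a,b$ central subgroups. Then $\mathit{Gras}_{ab}:=\mathit{Gras}(\Omega)\cap U_{ab}$ is a subtorsor of $U_{ab}$, and (for a base point $y\in\mathit{Gras}_{ab}$) the group $(\mathit{Gras}_{ab},y)$ acts from the left, by $(x,z)\mapsto\Gamma(x,a,y,b,z)$ and $(x,(z,\zeta))\mapsto(\Gamma(x,a,y,b,z),L_{xayb}(\zeta))$, and from the right, by $(z,x)\mapsto\Gamma(z,a,y,b,x)$ and $((z,\zeta),x)\mapsto(\Gamma(z,a,y,b,x),R_{aybx}(\zeta))$, on the Grassmannian $\mathit{Gras}(\Omega)$ and on the Grassmann tautological bundle $\widehat{\mathit{Gras}}(\Omega)=\{(z,\zeta): z\in\mathit{Gras}(\Omega),\ \zeta\in z\}$.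
   Context: $(\Omega,+)$ is a group written additively but not necessarily abelian; $\mathit{Gras}(\Omega)$ is its set of subgroups. For subsets $u,v$, $u\top v$ means every $\omega$ has a unique decomposition $\omega=\mu+\nu$ with $\mu\in u,\nu\in v$; then $P^u_v(\omega):=\nu$ and $\check P^v_u(\omega):=\mu$. $\Gamma(x,a,y,b,z)=\{\omega:\exists\alpha\in a,\beta\in b:\ \alpha+\omega+\beta\in y,\ \alpha+\omega\in z,\ \omega+\beta\in x\}$. $U_{ab}=\{x\subseteq\Omega: a\top x,\ x\top b\}$ with torsor law $\Gamma(\cdot,a,\cdot,b,\cdot)$; with base point $y$ it is a group with product $xz=\Gamma(x,a,y,b,z)$. $L_{xayb}:=-\check P^x_a\circ\check P^b_y+\mathrm{id}$, $R_{aybx}:=\mathrm{id}-P^x_b\circ P^{-a}_y$ (pointwise operations of maps $\Omega\to\Omega$). *)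

theory Defs
  imports Main
begin

text \<open>Omega is modelled as a type of class group_add (additive, not necessarily abelian).\<close>

definition is_subgrp :: "'a::group_add set \<Rightarrow> bool" where
  "is_subgrp x \<longleftrightarrow> 0 \<in> x \<and> (\<forall>u\<in>x. \<forall>v\<in>x. u + v \<in> x) \<and> (\<forall>u\<in>x. - u \<in> x)"

definition Gras :: "'a::group_add set set" where
  "Gras = {x. is_subgrp x}"

definition is_central :: "'a::group_add set \<Rightarrow> bool" where
  "is_central a \<longleftrightarrow> (\<forall>\<alpha>\<in>a. \<forall>\<omega>. \<alpha> + \<omega> = \<omega> + \<alpha>)"

definition transv :: "'a::group_add set \<Rightarrow> 'a set \<Rightarrow> bool" where
  "transv u v \<longleftrightarrow> (\<forall>\<omega>. \<exists>!p. p \<in> u \<times> v \<and> \<omega> = fst p + snd p)"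

definition Pproj :: "'a::group_add set \<Rightarrow> 'a set \<Rightarrow> 'a \<Rightarrow> 'a" where
  "Pproj u v \<omega> = snd (THE p. p \<in> u \<times> v \<and> \<omega> = fst p + snd p)"

definition Pcheck :: "'a::group_add set \<Rightarrow> 'a set \<Rightarrow> 'a \<Rightarrow> 'a" where
  "Pcheck v u \<omega> = fst (THE p. p \<in> u \<times> v \<and> \<omega> = fst p + snd p)"

definition Gamma :: "'a::group_add set \<Rightarrow> 'a set \<Rightarrow> 'a set \<Rightarrow> 'a set \<Rightarrow> 'a set \<Rightarrow> 'a set" where
  "Gamma x a y b z = {\<omega>. \<exists>\<alpha>\<in>a. \<exists>\<beta>\<in>b. \<alpha> + \<omega> + \<beta> \<in> y \<and> \<alpha> + \<omega> \<in> z \<and> \<omega> + \<beta> \<in> x}"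

definition U :: "'a::group_add set \<Rightarrow> 'a set \<Rightarrow> 'a set set" where
  "U a b = {x. transv a x \<and> transv x b}"

definition Gras_ab :: "'a::group_add set \<Rightarrow> 'a set \<Rightarrow> 'a set set" where
  "Gras_ab a b = Gras \<inter> U a b"

definition Gras_hat :: "('a::group_add set \<times> 'a) set" where
  "Gras_hat = {(z, \<zeta>). z \<in> Gras \<and> \<zeta> \<in> z}"

definition Lmap :: "'a::group_add set \<Rightarrow> 'a set \<Rightarrow> 'a set \<Rightarrow> 'a set \<Rightarrow> 'a \<Rightarrow> 'a" where
  "Lmap x a y b \<zeta> = - Pcheck x a (Pcheck b y \<zeta>) + \<zeta>"

definition Rmap :: "'a::group_add set \<Rightarrow> 'a set \<Rightarrow> 'a set \<Rightarrow> 'a set \<Rightarrow> 'a \<Rightarrow> 'a" where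
  "Rmap a y b x \<zeta> = \<zeta> - Pproj x b (Pproj (uminus ` a) y \<zeta>)"

definition is_subtorsor :: "'x set \<Rightarrow> 'x set \<Rightarrow> ('x \<Rightarrow> 'x \<Rightarrow> 'x \<Rightarrow> 'x) \<Rightarrow> bool" where
  "is_subtorsor S T law \<longleftrightarrow> S \<subseteq> T \<and> (\<forall>x\<in>S. \<forall>u\<in>S. \<forall>z\<in>S. law x u z \<in> S)"

definition is_left_action :: "'g set \<Rightarrow> ('g \<Rightarrow> 'g \<Rightarrow> 'g) \<Rightarrow> 'g \<Rightarrow> ('g \<Rightarrow> 'x \<Rightarrow> 'x) \<Rightarrow> 'x set \<Rightarrow> bool" where
  "is_left_action G m e act X \<longleftrightarrow>
     (\<forall>g\<in>G. \<forall>p\<in>X. act g p \<in> X) \<and> (\<forall>p\<in>X. act e p = p) \<and>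
     (\<forall>g\<in>G. \<forall>h\<in>G. \<forall>p\<in>X. act g (act h p) = act (m g h) p)"

definition is_right_action :: "'g set \<Rightarrow> ('g \<Rightarrow> 'g \<Rightarrow> 'g) \<Rightarrow> 'g \<Rightarrow> ('x \<Rightarrow> 'g \<Rightarrow> 'x) \<Rightarrow> 'x set \<Rightarrow> bool" where
  "is_right_action G m e act X \<longleftrightarrow>
     (\<forall>g\<in>G. \<forall>p\<in>X. act p g \<in> X) \<and> (\<forall>p\<in>X. act p e = p) \<and>
     (\<forall>g\<in>G. \<forall>h\<in>G. \<forall>p\<in>X. act (act p g) h = act p (m g h))"

end

theory Submission imports Defs begin

lemma subgrp_0: "is_subgrp x \<Longrightarrow> 0 \<in> x" by (simp add: is_subgrp_def)
lemma subgrp_add: "is_subgrp x \<Longrightarrow> u \<in> x \<Longrightarrow> v \<in> x \<Longrightarrow> u + v \<in> x" by (simp add: is_subgrp_def)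
lemma subgrp_neg: "is_subgrp x \<Longrightarrow> u \<in> x \<Longrightarrow> - u \<in> x" by (simp add: is_subgrp_def)
lemma central_comm: "is_central c \<Longrightarrow> g \<in> c \<Longrightarrow> g + w = w + g" unfolding is_central_def by blast

lemma transv_ex: "transv u v \<Longrightarrow> \<exists>m\<in>u. \<exists>n\<in>v. w = m + n"
  unfolding transv_def by (metis mem_Sigma_iff prod.collapse)

lemma transv_uniq:
  assumes "transv u v" "m \<in> u" "n \<in> v" "m' \<in> u" "n' \<in> v" "m + n = m' + n'"
  shows "m = m' \<and> n = n'"
proof -
  from assms(1) have "\<exists>!p. p \<in> u \<times> v \<and> m + n = fst p + snd p" unfolding transv_def by blast
  then have "(m, n) = (m', n')" using assms by (metis fst_conv snd_conv mem_Sigma_iff)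
  then show ?thesis by simp
qed

lemma transvI:
  assumes "\<And>w. \<exists>m\<in>u. \<exists>n\<in>v. w = m + n"
    and "\<And>m n m' n'. m \<in> u \<Longrightarrow> n \<in> v \<Longrightarrow> m' \<in> u \<Longrightarrow> n' \<in> v \<Longrightarrow> m + n = m' + n' \<Longrightarrow> m = m' \<and> n = n'"
  shows "transv u v"
  unfolding transv_def
proof
  fix w
  obtain m n where mn: "m \<in> u" "n \<in> v" "w = m + n" using assms(1) by blast
  show "\<exists>!p. p \<in> u \<times> v \<and> w = fst p + snd p"
  proof (rule ex1I[of _ "(m,n)"])
    show "(m, n) \<in> u \<times> v \<and> w = fst (m, n) + snd (m, n)" using mn by simp
    fix p assume "p \<in> u \<times> v \<and> w = fst p + snd p"
    then show "p = (m, n)" using assms(2)[of m n "fst p" "snd p"] mn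
      by (metis mem_Sigma_iff prod.collapse)
  qed
qed

lemma the_dec:
  assumes "transv u v" "m \<in> u" "n \<in> v"
  shows "(THE p. p \<in> u \<times> v \<and> m + n = fst p + snd p) = (m, n)"
  apply (rule the_equality)
  using assms apply simp
  using assms transv_uniq by (metis mem_Sigma_iff prod.collapse)

lemma Pproj_eq: "transv u v \<Longrightarrow> m \<in> u \<Longrightarrow> n \<in> v \<Longrightarrow> Pproj u v (m + n) = n"
  unfolding Pproj_def by (simp add: the_dec)
lemma Pcheck_eq: "transv u v \<Longrightarrow> m \<in> u \<Longrightarrow> n \<in> v \<Longrightarrow> Pcheck v u (m + n) = m"
  unfolding Pcheck_def by (simp add: the_dec)

lemma P_mem:
  assumes "transv u v"
  shows "Pcheck v u w \<in> u" "Pproj u v w \<in> v" "Pcheck v u w + Pproj u v w = w"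
proof -
  obtain m n where mn: "m \<in> u" "n \<in> v" "w = m + n" using transv_ex[OF assms] by blast
  show "Pcheck v u w \<in> u" "Pproj u v w \<in> v" "Pcheck v u w + Pproj u v w = w"
    using mn Pproj_eq[OF assms] Pcheck_eq[OF assms] by auto
qed

lemma transv_sym:
  assumes "is_central c" "transv c x" shows "transv x c"
proof (rule transvI)
  fix w obtain g n where "g \<in> c" "n \<in> x" "w = g + n" using transv_ex[OF assms(2)] by blast
  then show "\<exists>m\<in>x. \<exists>n\<in>c. w = m + n" using central_comm[OF assms(1)] by metis
next
  fix m n m' n' assume "m \<in> x" "n \<in> c" "m' \<in> x" "n' \<in> c" "m + n = m' + n'"
  then show "m = m' \<and> n = n'" using transv_uniq[OF assms(2), of n m n' m'] central_comm[OF assms(1)] by metis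
qed

lemma transv_sym2:
  assumes "is_central c" "transv x c" shows "transv c x"
proof (rule transvI)
  fix w obtain g n where "g \<in> x" "n \<in> c" "w = g + n" using transv_ex[OF assms(2)] by blast
  then show "\<exists>m\<in>c. \<exists>n\<in>x. w = m + n" using central_comm[OF assms(1)] by metis
next
  fix m n m' n' assume "m \<in> c" "n \<in> x" "m' \<in> c" "n' \<in> x" "m + n = m' + n'"
  then show "m = m' \<and> n = n'" using transv_uniq[OF assms(2), of n m n' m'] central_comm[OF assms(1)] by metis
qed

lemma Pproj_add:
  assumes "transv u v" "is_subgrp u" "is_subgrp v" "is_central v"
  shows "Pproj u v (w1 + w2) = Pproj u v w1 + Pproj u v w2"
proof -
  obtain m1 n1 where 1: "m1 \<in> u" "n1 \<in> v" "w1 = m1 + n1" using transv_ex[OF assms(1)] by blast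
  obtain m2 n2 where 2: "m2 \<in> u" "n2 \<in> v" "w2 = m2 + n2" using transv_ex[OF assms(1)] by blast
  have "w1 + w2 = (m1 + m2) + (n1 + n2)"
    using 1 2 central_comm[OF assms(4), of n1 m2] by (metis add.assoc)
  then show ?thesis using 1 2 Pproj_eq[OF assms(1)] subgrp_add[OF assms(2)] subgrp_add[OF assms(3)] by simp
qed

locale ctx =
  fixes a b :: "'a::group_add set"
  assumes sa: "is_subgrp a" and ca: "is_central a" and sb: "is_subgrp b" and cb: "is_central b"
begin

abbreviation good where "good x \<equiv> x \<in> Gras_ab a b"

lemma good_D:
  assumes "good x"
  shows "is_subgrp x" "transv a x" "transv x b" "transv x a" "transv b x"
  using assms transv_sym[OF ca] transv_sym2[OF cb]
  by (auto simp: Gras_ab_def Gras_def U_def)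

definition tal where "tal y x w = - Pcheck y a (w + - Pproj x b w)"
definition T where "T y x w = tal y x w + w"

lemma tal_a: "good y \<Longrightarrow> tal y x w \<in> a"
  unfolding tal_def using P_mem(1)[OF good_D(2)] subgrp_neg[OF sa] by blast

lemma x_part: assumes "good x" shows "w + - Pproj x b w \<in> x"
proof -
  have "Pcheck b x w + Pproj x b w = w" using P_mem(3)[OF good_D(3)[OF assms]] .
  then have "w + - Pproj x b w = Pcheck b x w" by (metis add_diff_cancel diff_conv_add_uminus)
  then show ?thesis using P_mem(1)[OF good_D(3)[OF assms]] by simp
qed

lemma T_y: assumes "good y" "good x" shows "tal y x w + w + - Pproj x b w \<in> y"
proof -
  define q where "q = w + - Pproj x b w"
  have q: "Pcheck y a q + Pproj a y q = q" using P_mem(3)[OF good_D(2)[OF assms(1)]] .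
  have "tal y x w + w + - Pproj x b w = - Pcheck y a q + q" unfolding tal_def q_def by (metis add.assoc)
  also have "\<dots> = Pproj a y q" using q by (metis minus_add_cancel)
  finally show ?thesis using P_mem(2)[OF good_D(2)[OF assms(1)]] by simp
qed

lemma T_char: assumes "good y" "good x" "g \<in> a" "g + w + - Pproj x b w \<in> y"
  shows "T y x w = g + w"
proof -
  define q where "q = w + - Pproj x b w"
  have "q = (- g) + (g + q)" by (simp add: add.assoc[symmetric])
  moreover have "g + q \<in> y" using assms(4) unfolding q_def by (metis add.assoc)
  ultimately have "Pcheck y a q = - g"
    using Pcheck_eq[OF good_D(2)[OF assms(1)], of "-g" "g+q"] subgrp_neg[OF sa assms(3)] by simp
  then have "tal y x w = g" unfolding tal_def q_def by simp
  then show ?thesis unfolding T_def by simp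
qed

lemma Gamma_iff: assumes "good y" "good x"
  shows "w \<in> Gamma x a y b z \<longleftrightarrow> T y x w \<in> z"
proof
  assume "w \<in> Gamma x a y b z"
  then obtain g h where g: "g \<in> a" "h \<in> b" "g + w + h \<in> y" "g + w \<in> z" "w + h \<in> x"
    unfolding Gamma_def by blast
  have "w = (w + h) + (- h)" by (simp add: add.assoc)
  then have "Pproj x b w = - h" using Pproj_eq[OF good_D(3)[OF assms(2)], of "w+h" "-h"] g subgrp_neg[OF sb]
    by metis
  then have "T y x w = g + w" using T_char[OF assms g(1)] g(3) by simp
  then show "T y x w \<in> z" using g by simp
next
  assume "T y x w \<in> z"
  then show "w \<in> Gamma x a y b z" unfolding Gamma_def
    using tal_a[OF assms(1)] T_y[OF assms] x_part[OF assms(2)] subgrp_neg[OF sb] P_mem(2)[OF good_D(3)[OF assms(2)]]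
    unfolding T_def by blast
qed

lemma T_L: assumes "good y" "good x" shows "T y x (Lmap x a y b z) = z"
proof -
  define e where "e = Pcheck b y z"
  define b0 where "b0 = Pproj y b z"
  define g where "g = Pcheck x a e"
  define k where "k = Pproj a x e"
  have e: "e \<in> y" "b0 \<in> b" "z = e + b0" using P_mem[OF good_D(3)[OF assms(1)], of z] e_def b0_def by auto
  have g: "g \<in> a" "k \<in> x" "e = g + k" using P_mem[OF good_D(2)[OF assms(2)], of e] g_def k_def by auto
  have L: "Lmap x a y b z = - g + z" unfolding Lmap_def g_def e_def ..
  also have "\<dots> = k + b0" using e g by (simp add: add.assoc)
  finally have L2: "Lmap x a y b z = k + b0" .
  have "Pproj x b (Lmap x a y b z) = b0" using L2 Pproj_eq[OF good_D(3)[OF assms(2)]] e g by simp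
  then have "g + Lmap x a y b z + - Pproj x b (Lmap x a y b z) = e" using L2 g by (simp add: add.assoc[symmetric])
  then have "T y x (Lmap x a y b z) = g + Lmap x a y b z" using T_char[OF assms g(1)] e by simp
  then show ?thesis using L by (simp add: add.assoc[symmetric])
qed

lemma L_T: assumes "good y" "good x" shows "Lmap x a y b (T y x w) = w"
proof -
  define t where "t = T y x w"
  define h where "h = Pproj x b w"
  have ty: "t + - h \<in> y" using T_y[OF assms] unfolding t_def h_def T_def .
  have "t = (t + - h) + h" by (simp add: add.assoc)
  then have 1: "Pcheck b y t = t + - h" using Pcheck_eq[OF good_D(3)[OF assms(1)], of "t + -h" h] ty
      P_mem(2)[OF good_D(3)[OF assms(2)]] h_def by metis
  have "t + - h = tal y x w + (w + - h)" unfolding t_def T_def by (metis add.assoc)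
  then have 2: "Pcheck x a (t + - h) = tal y x w"
    using Pcheck_eq[OF good_D(2)[OF assms(2)]] tal_a[OF assms(1)] x_part[OF assms(2)] h_def by metis
  show ?thesis unfolding Lmap_def t_def[symmetric] 1 2 unfolding t_def T_def by (simp add: add.assoc[symmetric])
qed


lemma T_add: assumes "good y" "good x" shows "T y x (w1 + w2) = T y x w1 + T y x w2"
proof -
  define g1 where "g1 = tal y x w1"
  define g2 where "g2 = tal y x w2"
  define B1 where "B1 = Pproj x b w1"
  define B2 where "B2 = Pproj x b w2"
  have gb: "g1 \<in> a" "g2 \<in> a" "B1 \<in> b" "B2 \<in> b" "- B1 \<in> b"
    using tal_a[OF assms(1)] P_mem(2)[OF good_D(3)[OF assms(2)]] subgrp_neg[OF sb]
    unfolding g1_def g2_def B1_def B2_def by auto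
  have Y1: "g1 + w1 + - B1 \<in> y" using T_y[OF assms] g1_def B1_def by simp
  have Y2: "g2 + w2 + - B2 \<in> y" using T_y[OF assms] g2_def B2_def by simp
  have B: "Pproj x b (w1 + w2) = B1 + B2"
    unfolding B1_def B2_def by (rule Pproj_add[OF good_D(3)[OF assms(2)] good_D(1)[OF assms(2)] sb cb])
  have c1: "g2 + w1 = w1 + g2" using central_comm[OF ca gb(2)] .
  have c2: "(g2 + w2 + - B2) + - B1 = - B1 + (g2 + w2 + - B2)" using central_comm[OF cb gb(5)] by simp
  have "(g1 + g2) + (w1 + w2) + - Pproj x b (w1 + w2) = g1 + (g2 + w1) + w2 + (- B2 + - B1)"
    unfolding B minus_add by (metis add.assoc)
  also have "\<dots> = (g1 + w1) + ((g2 + w2 + - B2) + - B1)" unfolding c1 by (metis add.assoc)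
  also have "\<dots> = (g1 + w1 + - B1) + (g2 + w2 + - B2)" unfolding c2 by (metis add.assoc)
  finally have "(g1 + g2) + (w1 + w2) + - Pproj x b (w1 + w2) \<in> y"
    using subgrp_add[OF good_D(1)[OF assms(1)] Y1 Y2] by simp
  then have "T y x (w1 + w2) = (g1 + g2) + (w1 + w2)"
    using T_char[OF assms subgrp_add[OF sa gb(1,2)]] by simp
  also have "\<dots> = T y x w1 + T y x w2" unfolding T_def g1_def[symmetric] g2_def[symmetric]
    using c1 by (metis add.assoc)
  finally show ?thesis .
qed

lemma T_b: assumes "good y" "good x" "h \<in> b" shows "T y x h = h"
proof -
  have "Pproj x b h = h" using Pproj_eq[OF good_D(3)[OF assms(2)], of 0 h] subgrp_0[OF good_D(1)[OF assms(2)]] assms(3) by simp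
  then have "0 + h + - Pproj x b h \<in> y" using subgrp_0[OF good_D(1)[OF assms(1)]] by simp
  then show ?thesis using T_char[OF assms(1,2) subgrp_0[OF sa]] by simp
qed

lemma T_a: assumes "good y" "g \<in> a" shows "T y x g \<in> a"
  unfolding T_def using tal_a[OF assms(1)] assms(2) subgrp_add[OF sa] by blast

lemma L_a: assumes "good x" "g \<in> a" shows "Lmap x a y b g \<in> a"
  unfolding Lmap_def using P_mem(1)[OF good_D(2)[OF assms(1)]] subgrp_neg[OF sa] subgrp_add[OF sa] assms(2) by blast

lemma T_inj: assumes "good y" "good x" "T y x w1 = T y x w2" shows "w1 = w2"
  using L_T[OF assms(1,2)] assms(3) by metis

lemma T_0: assumes "good y" "good x" shows "T y x 0 = 0"
  proof -
  have "T y x 0 + T y x 0 = T y x 0 + 0" using T_add[OF assms, of 0 0] by simp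
  then show ?thesis by (rule add_left_imp_eq)
qed

lemma T_neg: assumes "good y" "good x" shows "T y x (- w) = - T y x w"
  proof -
  have "T y x (- w) + T y x w = 0" using T_add[OF assms, of "-w" w] T_0[OF assms] by simp
  then show ?thesis by (simp add: eq_neg_iff_add_eq_0)
qed

lemma T_id: assumes "good y" shows "T y y w = w"
proof -
  have "0 + w + - Pproj y b w \<in> y" using x_part[OF assms] by simp
  then show ?thesis using T_char[OF assms assms subgrp_0[OF sa]] by simp
qed

lemma L_id: assumes "good y" shows "Lmap y a y b w = w"
  using L_T[OF assms assms, of w] T_id[OF assms] by simp

lemma Gamma_subgrp: assumes "good y" "good x" "is_subgrp z" shows "is_subgrp (Gamma x a y b z)"
proof -
  note G = Gamma_iff[OF assms(1,2)]
  have "0 \<in> Gamma x a y b z" using G T_0[OF assms(1,2)] subgrp_0[OF assms(3)] by simp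
  moreover have "\<forall>u\<in>Gamma x a y b z. \<forall>v\<in>Gamma x a y b z. u + v \<in> Gamma x a y b z"
    using G T_add[OF assms(1,2)] subgrp_add[OF assms(3)] by simp
  moreover have "\<forall>u\<in>Gamma x a y b z. - u \<in> Gamma x a y b z"
    using G T_neg[OF assms(1,2)] subgrp_neg[OF assms(3)] by simp
  ultimately show ?thesis unfolding is_subgrp_def by blast
qed

lemma Gamma_good: assumes "good u" "good x" "good z" shows "good (Gamma x a u b z)"
proof -
  let ?v = "Gamma x a u b z"
  note G = Gamma_iff[OF assms(1,2)]
  note TA = T_add[OF assms(1,2)]
  have sv: "is_subgrp ?v" using Gamma_subgrp[OF assms(1,2) good_D(1)[OF assms(3)]] .
  have tav: "transv a ?v"
  proof (rule transvI)
    fix w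
    obtain g' k where gk: "g' \<in> a" "k \<in> z" "T u x w = g' + k" using transv_ex[OF good_D(2)[OF assms(3)]] by blast
    define n where "n = Lmap x a u b k"
    have Tn: "T u x n = k" unfolding n_def by (rule T_L[OF assms(1,2)])
    have nv: "n \<in> ?v" using G Tn gk by simp
    have "T u x (w + - n) = g'" using TA[of w "-n"] T_neg[OF assms(1,2), of n] Tn gk
      by (simp add: add.assoc)
    then have "w + - n = Lmap x a u b g'" using L_T[OF assms(1,2), of "w + - n"] by simp
    then have "w + - n \<in> a" using L_a[OF assms(2) gk(1)] by simp
    moreover have "w = (w + - n) + n" by (simp add: add.assoc)
    ultimately show "\<exists>m\<in>a. \<exists>n\<in>?v. w = m + n" using nv by blast
  next
    fix m n m' n' assume h: "m \<in> a" "n \<in> ?v" "m' \<in> a" "n' \<in> ?v" "m + n = m' + n'"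
    have "T u x m + T u x n = T u x m' + T u x n'" using TA h(5) by metis
    then have "T u x m = T u x m' \<and> T u x n = T u x n'"
      using transv_uniq[OF good_D(2)[OF assms(3)]] T_a[OF assms(1)] h G by metis
    then show "m = m' \<and> n = n'" using T_inj[OF assms(1,2)] by blast
  qed
  have tvb: "transv ?v b"
  proof (rule transvI)
    fix w
    obtain k h where kh: "k \<in> z" "h \<in> b" "T u x w = k + h" using transv_ex[OF good_D(3)[OF assms(3)]] by blast
    define n where "n = Lmap x a u b k"
    have Tn: "T u x n = k" unfolding n_def by (rule T_L[OF assms(1,2)])
    have nv: "n \<in> ?v" using G Tn kh by simp
    have "T u x (- n + w) = h" using TA[of "-n" w] T_neg[OF assms(1,2), of n] Tn kh
      by (simp add: add.assoc[symmetric])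
    then have "T u x (- n + w) = T u x h" using T_b[OF assms(1,2) kh(2)] by simp
    then have "- n + w = h" by (rule T_inj[OF assms(1,2)])
    moreover have "w = n + (- n + w)" by (simp add: add.assoc[symmetric])
    ultimately show "\<exists>m\<in>?v. \<exists>n\<in>b. w = m + n" using nv kh by metis
  next
    fix m n m' n' assume h: "m \<in> ?v" "n \<in> b" "m' \<in> ?v" "n' \<in> b" "m + n = m' + n'"
    have "T u x m + n = T u x m' + n'" using TA h T_b[OF assms(1,2)] by metis
    then have "T u x m = T u x m' \<and> n = n'"
      using transv_uniq[OF good_D(3)[OF assms(3)]] h G by metis
    then show "m = m' \<and> n = n'" using T_inj[OF assms(1,2)] by blast
  qed
  show ?thesis using sv tav tvb by (simp add: Gras_ab_def Gras_def U_def)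
qed

lemma T_comp: assumes "good y" "good x" "good w"
  shows "T y (Gamma x a y b w) u = T y w (T y x u)"
proof -
  let ?v = "Gamma x a y b w"
  have gv: "good ?v" using Gamma_good[OF assms] .
  define k where "k = Pcheck b ?v u"
  define h where "h = Pproj ?v b u"
  have kh: "k \<in> ?v" "h \<in> b" "u = k + h" using P_mem[OF good_D(3)[OF gv], of u] k_def h_def by auto
  have Tk: "T y x k \<in> w" using kh Gamma_iff[OF assms(1,2)] by simp
  have "T y x u = T y x k + h" using kh T_add[OF assms(1,2)] T_b[OF assms(1,2)] by metis
  then have PB: "Pproj w b (T y x u) = h" using Pproj_eq[OF good_D(3)[OF assms(3)]] Tk kh by simp
  define g where "g = tal y w (T y x u) + tal y x u"
  have ga: "g \<in> a" unfolding g_def using tal_a[OF assms(1)] subgrp_add[OF sa] by blast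
  have TT: "T y w (T y x u) = g + u" unfolding g_def T_def by (simp add: add.assoc)
  have "tal y w (T y x u) + T y x u + - Pproj w b (T y x u) \<in> y" using T_y[OF assms(1,3)] .
  then have "g + u + - Pproj ?v b u \<in> y" using TT PB h_def unfolding T_def by (simp add: add.assoc)
  then have "T y ?v u = g + u" using T_char[OF assms(1) gv ga] by simp
  then show ?thesis using TT by simp
qed

lemma Gamma_id: assumes "good y" shows "Gamma y a y b p = p"
  using Gamma_iff[OF assms assms] T_id[OF assms] by auto

lemma Gamma_comp: assumes "good y" "good g" "good h"
  shows "Gamma g a y b (Gamma h a y b p) = Gamma (Gamma g a y b h) a y b p"
proof -
  have gv: "good (Gamma g a y b h)" using Gamma_good[OF assms] .
  show ?thesis
    using Gamma_iff[OF assms(1,2)] Gamma_iff[OF assms(1,3)] Gamma_iff[OF assms(1) gv] T_comp[OF assms]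
    by auto
qed

lemma L_comp: assumes "good y" "good g" "good h"
  shows "Lmap g a y b (Lmap h a y b z) = Lmap (Gamma g a y b h) a y b z"
proof -
  have gv: "good (Gamma g a y b h)" using Gamma_good[OF assms] .
  have "T y (Gamma g a y b h) (Lmap g a y b (Lmap h a y b z)) = z"
    using T_comp[OF assms] T_L[OF assms(1,2)] T_L[OF assms(1,3)] by simp
  moreover have "T y (Gamma g a y b h) (Lmap (Gamma g a y b h) a y b z) = z" using T_L[OF assms(1) gv] .
  ultimately show ?thesis using T_inj[OF assms(1) gv] by metis
qed

lemma left_main: assumes "good y"
  shows "is_subtorsor (Gras_ab a b) (U a b) (\<lambda>x u z. Gamma x a u b z)
    \<and> is_left_action (Gras_ab a b) (\<lambda>x z. Gamma x a y b z) y
        (\<lambda>x z. Gamma x a y b z) Gras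
    \<and> is_left_action (Gras_ab a b) (\<lambda>x z. Gamma x a y b z) y
        (\<lambda>x (z, \<zeta>). (Gamma x a y b z, Lmap x a y b \<zeta>)) Gras_hat"
proof (intro conjI)
  show "is_subtorsor (Gras_ab a b) (U a b) (\<lambda>x u z. Gamma x a u b z)"
    unfolding is_subtorsor_def using Gamma_good by (auto simp: Gras_ab_def)
  show "is_left_action (Gras_ab a b) (\<lambda>x z. Gamma x a y b z) y (\<lambda>x z. Gamma x a y b z) Gras"
    unfolding is_left_action_def using Gamma_subgrp[OF assms] Gamma_id[OF assms] Gamma_comp[OF assms]
    by (simp add: Gras_def)
  show "is_left_action (Gras_ab a b) (\<lambda>x z. Gamma x a y b z) y
        (\<lambda>x (z, \<zeta>). (Gamma x a y b z, Lmap x a y b \<zeta>)) Gras_hat"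
    unfolding is_left_action_def
  proof (intro conjI ballI)
    fix g and p :: "'a set \<times> 'a" assume g: "good g" and p: "p \<in> Gras_hat"
    obtain z e where pz: "p = (z, e)" "is_subgrp z" "e \<in> z" using p by (auto simp: Gras_hat_def Gras_def)
    have "Lmap g a y b e \<in> Gamma g a y b z" using Gamma_iff[OF assms g] T_L[OF assms g] pz by simp
    then show "(case p of (z, \<zeta>) \<Rightarrow> (Gamma g a y b z, Lmap g a y b \<zeta>)) \<in> Gras_hat"
      using pz Gamma_subgrp[OF assms g] by (simp add: Gras_hat_def Gras_def)
  next
    fix p :: "'a set \<times> 'a" assume p: "p \<in> Gras_hat"
    then show "(case p of (z, \<zeta>) \<Rightarrow> (Gamma y a y b z, Lmap y a y b \<zeta>)) = p"
      using Gamma_id[OF assms] L_id[OF assms] by (auto split: prod.splits)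
  next
    fix g h and p :: "'a set \<times> 'a" assume g: "good g" and h: "good h" and p: "p \<in> Gras_hat"
    show "(case case p of (z, \<zeta>) \<Rightarrow> (Gamma h a y b z, Lmap h a y b \<zeta>) of
         (z, \<zeta>) \<Rightarrow> (Gamma g a y b z, Lmap g a y b \<zeta>)) =
       (case p of (z, \<zeta>) \<Rightarrow> (Gamma (Gamma g a y b h) a y b z, Lmap (Gamma g a y b h) a y b \<zeta>))"
      using Gamma_comp[OF assms g h] L_comp[OF assms g h] by (auto split: prod.splits)
  qed
qed

end


lemma Gras_ab_swap: assumes "is_central a" "is_central b" shows "Gras_ab a b = Gras_ab b a"
  unfolding Gras_ab_def U_def using transv_sym[OF assms(1)] transv_sym2[OF assms(1)]
    transv_sym[OF assms(2)] transv_sym2[OF assms(2)] by blast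

lemma Gamma_swap: assumes "is_central a" "is_central b" shows "Gamma z a y b x = Gamma x b y a z"
proof -
  have K: "g + w + h = h + w + g \<and> g + w = w + g \<and> w + h = h + w" if "g \<in> a" "h \<in> b" for g h w
  proof -
    have 1: "g + w = w + g" using central_comm[OF assms(1) that(1)] .
    have 2: "w + h = h + w" using central_comm[OF assms(2) that(2)] by simp
    have 3: "(w + g) + h = h + (w + g)" using central_comm[OF assms(2) that(2)] by simp
    have "g + w + h = h + w + g" using 1 3 by (simp add: add.assoc)
    then show ?thesis using 1 2 by simp
  qed
  show ?thesis
  proof (rule set_eqI)
    fix w
    show "w \<in> Gamma z a y b x \<longleftrightarrow> w \<in> Gamma x b y a z"
      unfolding Gamma_def mem_Collect_eq
    proof
      assume "\<exists>g\<in>a. \<exists>h\<in>b. g + w + h \<in> y \<and> g + w \<in> x \<and> w + h \<in> z"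
      then obtain g h where gh: "g \<in> a" "h \<in> b" "g + w + h \<in> y" "g + w \<in> x" "w + h \<in> z" by blast
      have "h + w + g \<in> y \<and> h + w \<in> z \<and> w + g \<in> x" using K[OF gh(1,2), of w] gh by metis
      then show "\<exists>h\<in>b. \<exists>g\<in>a. h + w + g \<in> y \<and> h + w \<in> z \<and> w + g \<in> x" using gh by blast
    next
      assume "\<exists>h\<in>b. \<exists>g\<in>a. h + w + g \<in> y \<and> h + w \<in> z \<and> w + g \<in> x"
      then obtain g h where gh: "g \<in> a" "h \<in> b" "h + w + g \<in> y" "h + w \<in> z" "w + g \<in> x" by blast
      have "g + w + h \<in> y \<and> g + w \<in> x \<and> w + h \<in> z" using K[OF gh(1,2), of w] gh by metis
      then show "\<exists>g\<in>a. \<exists>h\<in>b. g + w + h \<in> y \<and> g + w \<in> x \<and> w + h \<in> z" using gh by blast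
    qed
  qed
qed

lemma neg_subgrp: "is_subgrp a \<Longrightarrow> uminus ` a = a"
  unfolding is_subgrp_def by (auto simp: image_iff) (metis minus_minus)

lemma Rmap_swap: assumes "is_subgrp a" "is_central a" "is_central b" "is_subgrp b" "y \<in> Gras_ab a b" "x \<in> Gras_ab a b"
  shows "Rmap a y b x t = Lmap x b y a t"
proof -
  have ay: "transv a y" and xb: "transv x b" using assms(5,6) by (auto simp: Gras_ab_def U_def)
  have ya: "transv y a" using transv_sym[OF assms(2) ay] .
  have bx: "transv b x" using transv_sym2[OF assms(3) xb] .
  define e where "e = Pcheck a y t"
  have e: "e \<in> y" "Pproj y a t \<in> a" "e + Pproj y a t = t" using P_mem[OF ya, of t] e_def by auto
  have te: "t = Pproj y a t + e" using e(3) central_comm[OF assms(2) e(2), of e] by simp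
  have 1: "Pproj (uminus ` a) y t = e" unfolding neg_subgrp[OF assms(1)]
    using Pproj_eq[OF ay e(2) e(1)] te by simp
  define h where "h = Pproj x b e"
  have h: "Pcheck b x e \<in> x" "h \<in> b" "Pcheck b x e + h = e" unfolding h_def using P_mem[OF xb, of e] by auto
  have eh: "e = h + Pcheck b x e" using h(3) central_comm[OF assms(3) h(2), of "Pcheck b x e"] by simp
  have 2: "Pcheck x b e = h" using Pcheck_eq[OF bx h(2) h(1)] eh by simp
  show ?thesis unfolding Rmap_def Lmap_def 1 e_def[symmetric] 2 h_def[symmetric]
    using central_comm[OF assms(3) subgrp_neg[OF assms(4) h(2)], of t]
    by (simp only: diff_conv_add_uminus)
qed


theorem theorem7p6:
  fixes a b y :: "'a::group_add set"
  assumes "is_subgrp a" and "is_central a"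
    and "is_subgrp b" and "is_central b"
    and "y \<in> Gras_ab a b"
  shows "is_subtorsor (Gras_ab a b) (U a b) (\<lambda>x u z. Gamma x a u b z)
    \<and> is_left_action (Gras_ab a b) (\<lambda>x z. Gamma x a y b z) y
        (\<lambda>x z. Gamma x a y b z) Gras
    \<and> is_left_action (Gras_ab a b) (\<lambda>x z. Gamma x a y b z) y
        (\<lambda>x (z, \<zeta>). (Gamma x a y b z, Lmap x a y b \<zeta>)) Gras_hat
    \<and> is_right_action (Gras_ab a b) (\<lambda>x z. Gamma x a y b z) y
        (\<lambda>z x. Gamma z a y b x) Gras
    \<and> is_right_action (Gras_ab a b) (\<lambda>x z. Gamma x a y b z) y
        (\<lambda>(z, \<zeta>) x. (Gamma z a y b x, Rmap a y b x \<zeta>)) Gras_hat"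
proof -
  interpret A: ctx a b using assms by unfold_locales
  interpret B: ctx b a using assms by unfold_locales
  have GS: "Gras_ab a b = Gras_ab b a" by (rule Gras_ab_swap[OF assms(2,4)])
  have yb: "y \<in> Gras_ab b a" using assms(5) GS by simp
  note L = A.left_main[OF assms(5)]
  note R = B.left_main[OF yb]
  have sw: "\<And>z x. Gamma z a y b x = Gamma x b y a z" by (rule Gamma_swap[OF assms(2,4)])
  have rsw: "\<And>x t. x \<in> Gras_ab a b \<Longrightarrow> Rmap a y b x t = Lmap x b y a t"
    by (rule Rmap_swap[OF assms(1,2,4,3,5)])
  have R1: "is_left_action (Gras_ab b a) (\<lambda>x z. Gamma x b y a z) y (\<lambda>x z. Gamma x b y a z) Gras"
    using R by blast
  have R2: "is_left_action (Gras_ab b a) (\<lambda>x z. Gamma x b y a z) y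
        (\<lambda>x (z, \<zeta>). (Gamma x b y a z, Lmap x b y a \<zeta>)) Gras_hat"
    using R by blast
  have X1: "is_right_action (Gras_ab a b) (\<lambda>x z. Gamma x a y b z) y (\<lambda>z x. Gamma z a y b x) Gras"
    using R1 unfolding is_right_action_def is_left_action_def sw GS by auto
  note R2u = R2[unfolded is_left_action_def]
  have R2a: "\<And>g p. g \<in> Gras_ab b a \<Longrightarrow> p \<in> Gras_hat \<Longrightarrow>
      (case p of (z, \<zeta>) \<Rightarrow> (Gamma g b y a z, Lmap g b y a \<zeta>)) \<in> Gras_hat"
    using R2u by blast
  have R2b: "\<And>p. p \<in> Gras_hat \<Longrightarrow> (case p of (z, \<zeta>) \<Rightarrow> (Gamma y b y a z, Lmap y b y a \<zeta>)) = p"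
    using R2u by blast
  have R2c: "\<And>g h p. g \<in> Gras_ab b a \<Longrightarrow> h \<in> Gras_ab b a \<Longrightarrow> p \<in> Gras_hat \<Longrightarrow>
       (case case p of (z, \<zeta>) \<Rightarrow> (Gamma h b y a z, Lmap h b y a \<zeta>) of
         (z, \<zeta>) \<Rightarrow> (Gamma g b y a z, Lmap g b y a \<zeta>)) =
       (case p of (z, \<zeta>) \<Rightarrow> (Gamma (Gamma g b y a h) b y a z, Lmap (Gamma g b y a h) b y a \<zeta>))"
    using R2u by blast
  have X2: "is_right_action (Gras_ab a b) (\<lambda>x z. Gamma x a y b z) y
        (\<lambda>(z, \<zeta>) x. (Gamma z a y b x, Rmap a y b x \<zeta>)) Gras_hat"
    unfolding is_right_action_def
  proof (intro conjI ballI)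
    fix g and p :: "'a set \<times> 'a" assume g: "g \<in> Gras_ab a b" and p: "p \<in> Gras_hat"
    obtain z e where pz: "p = (z, e)" by (cases p)
    have g': "g \<in> Gras_ab b a" using g unfolding GS .
    have "(Gamma g b y a z, Lmap g b y a e) \<in> Gras_hat"
      using R2a[OF g' p] unfolding pz prod.case .
    then show "(case p of (z, \<zeta>) \<Rightarrow> \<lambda>x. (Gamma z a y b x, Rmap a y b x \<zeta>)) g \<in> Gras_hat"
      unfolding pz prod.case rsw[OF g] sw .
  next
    fix p :: "'a set \<times> 'a" assume p: "p \<in> Gras_hat"
    obtain z e where pz: "p = (z, e)" by (cases p)
    have "(Gamma y b y a z, Lmap y b y a e) = (z, e)"
      using R2b[OF p] unfolding pz prod.case .
    then show "(case p of (z, \<zeta>) \<Rightarrow> \<lambda>x. (Gamma z a y b x, Rmap a y b x \<zeta>)) y = p"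
      unfolding pz prod.case rsw[OF assms(5)] sw .
  next
    fix g h and p :: "'a set \<times> 'a" assume g: "g \<in> Gras_ab a b" and h: "h \<in> Gras_ab a b" and p: "p \<in> Gras_hat"
    obtain z e where pz: "p = (z, e)" by (cases p)
    have gh: "Gamma g a y b h \<in> Gras_ab a b" by (rule A.Gamma_good[OF assms(5) g h])
    have g': "g \<in> Gras_ab b a" using g unfolding GS .
    have h': "h \<in> Gras_ab b a" using h unfolding GS .
    have E0: "(Gamma h b y a (Gamma g b y a z), Lmap h b y a (Lmap g b y a e))
       = (Gamma (Gamma h b y a g) b y a z, Lmap (Gamma h b y a g) b y a e)"
      using R2c[OF h' g' p] unfolding pz prod.case .
    show "(case (case p of (z, \<zeta>) \<Rightarrow> \<lambda>x. (Gamma z a y b x, Rmap a y b x \<zeta>)) g of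
             (z, \<zeta>) \<Rightarrow> \<lambda>x. (Gamma z a y b x, Rmap a y b x \<zeta>)) h =
          (case p of (z, \<zeta>) \<Rightarrow> \<lambda>x. (Gamma z a y b x, Rmap a y b x \<zeta>)) (Gamma g a y b h)"
      unfolding pz prod.case rsw[OF g] rsw[OF h] rsw[OF gh] unfolding sw using E0 .
  qed
  show ?thesis using L X1 X2 by blast
qed

end
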